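(* Let $J$ be a countable set and $\mathcal{A}$ the non-unital algebra of finitely supported functions $J\to\mathbb{R}$ with pointwise operations. Let $\sigma:J\to J$ be a bijection and $\tilde{\sigma}(f)=f\circ\sigma^{-1}$. In the skew polynomial ring $\mathcal{A}[x,\tilde{\sigma},0]$, the centralizer of $\mathcal{A}$ is $$C(\mathcal{A})=\Big\{\sum_{k=0}^m f_kx^k : f_k\in\mathcal{A},\ f_k=0\text{ on } Sep^k(J)\text{ for all }k\Big\}.$$
   Context: $\mathcal{A}[x,\tilde{\sigma},0]$ is the set of formal sums $\sum_{k=0}^m f_kx^k$ with $f_k\in\mathcal{A}$, with coefficientwise addition and with multiplication the bilinear extension of $(fx^k)(gx^l)=f\,\tilde{\sigma}^k(g)\,x^{k+l}$; $\mathcal{A}$ is identified with the degree-$0$ elements. The centralizer of $\mathcal{A}$ is the set of elements commuting with every element of $\mathcal{A}$. For an integer $k$, $Sep^k(J)=\{p\in J:\sigma^k(p)\neq p\}$ (so $Sep^0(J)=\emptyset$). *)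

theory Defs
  imports Complex_Main "HOL-Library.Countable"
begin

definition Alg :: "('j \<Rightarrow> real) set" where
  "Alg = {f. finite {p. f p \<noteq> 0}}"

type_synonym 'j skew_poly = "nat \<Rightarrow> ('j \<Rightarrow> real)"

definition SkewPoly :: "'j skew_poly set" where
  "SkewPoly = {P. (\<forall>k. P k \<in> Alg) \<and> finite {k. P k \<noteq> (\<lambda>_. 0)}}"

definition sigma_tilde :: "('j \<Rightarrow> 'j) \<Rightarrow> ('j \<Rightarrow> real) \<Rightarrow> ('j \<Rightarrow> real)" where
  "sigma_tilde \<sigma> f = f \<circ> inv \<sigma>"

text \<open>Multiplication: bilinear extension of (f x^k)(g x^l) = f sigma_tilde^k(g) x^(k+l).\<close>
definition skew_mult :: "('j \<Rightarrow> 'j) \<Rightarrow> 'j skew_poly \<Rightarrow> 'j skew_poly \<Rightarrow> 'j skew_poly" where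
  "skew_mult \<sigma> P Q = (\<lambda>n p. \<Sum>k\<le>n. P k p * ((sigma_tilde \<sigma> ^^ k) (Q (n - k))) p)"

definition deg0 :: "('j \<Rightarrow> real) \<Rightarrow> 'j skew_poly" where
  "deg0 a = (\<lambda>k. if k = 0 then a else (\<lambda>_. 0))"

definition centralizer :: "('j \<Rightarrow> 'j) \<Rightarrow> 'j skew_poly set" where
  "centralizer \<sigma> = {P \<in> SkewPoly. \<forall>a \<in> Alg. skew_mult \<sigma> (deg0 a) P = skew_mult \<sigma> P (deg0 a)}"

definition Sep :: "('j \<Rightarrow> 'j) \<Rightarrow> nat \<Rightarrow> 'j set" where
  "Sep \<sigma> k = {p. (\<sigma> ^^ k) p \<noteq> p}"

end

theory Submission
  imports Defs
begin

lemma st_pow: "(sigma_tilde \<sigma> ^^ k) a = a \<circ> (inv \<sigma> ^^ k)"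
proof (induction k arbitrary: a)
  case 0 then show ?case by simp
next
  case (Suc k)
  have "(sigma_tilde \<sigma> ^^ Suc k) a = (sigma_tilde \<sigma> ^^ k) (sigma_tilde \<sigma> a)"
    by (simp add: funpow_Suc_right del: funpow.simps)
  also have "\<dots> = (a \<circ> inv \<sigma>) \<circ> (inv \<sigma> ^^ k)" unfolding sigma_tilde_def[of \<sigma> a, symmetric] by (rule Suc.IH)
  also have "\<dots> = a \<circ> (inv \<sigma> \<circ> (inv \<sigma> ^^ k))" by (simp add: comp_assoc)
  also have "\<dots> = a \<circ> (inv \<sigma> ^^ Suc k)" by simp
  finally show ?case .
qed

lemma inv_pow_cancel: "bij (\<sigma>::'a\<Rightarrow>'a) \<Longrightarrow> (inv \<sigma> ^^ n) ((\<sigma> ^^ n) p) = p"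
proof (induction n arbitrary: p)
  case 0 then show ?case by simp
next
  case (Suc n)
  have "(inv \<sigma> ^^ Suc n) ((\<sigma> ^^ Suc n) p) = (inv \<sigma> ^^ n) (inv \<sigma> ((\<sigma> ^^ Suc n) p))"
    by (simp add: funpow_Suc_right del: funpow.simps)
  also have "\<dots> = (inv \<sigma> ^^ n) ((\<sigma> ^^ n) p)"
    using Suc.prems by (simp add: bij_is_inj)
  finally show ?case using Suc by simp
qed

lemma pow_inv_cancel: "bij (\<sigma>::'a\<Rightarrow>'a) \<Longrightarrow> (\<sigma> ^^ n) ((inv \<sigma> ^^ n) p) = p"
proof (induction n arbitrary: p)
  case 0 then show ?case by simp
next
  case (Suc n)
  have "(\<sigma> ^^ Suc n) ((inv \<sigma> ^^ Suc n) p) = (\<sigma> ^^ n) (\<sigma> ((inv \<sigma> ^^ Suc n) p))"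
    by (simp add: funpow_Suc_right del: funpow.simps)
  also have "\<dots> = (\<sigma> ^^ n) ((inv \<sigma> ^^ n) p)"
    using Suc.prems by (simp add: bij_is_surj surj_f_inv_f)
  finally show ?case using Suc by simp
qed

lemma left_mult: "skew_mult \<sigma> (deg0 a) P n p = a p * P n p"
proof -
  have "skew_mult \<sigma> (deg0 a) P n p = (\<Sum>k\<le>n. if k = 0 then a p * P n p else 0)"
    unfolding skew_mult_def deg0_def by (intro sum.cong) auto
  also have "\<dots> = a p * P n p" by (simp add: sum.delta)
  finally show ?thesis .
qed

lemma right_mult: "skew_mult \<sigma> P (deg0 a) n p = P n p * a ((inv \<sigma> ^^ n) p)"
proof -
  have "skew_mult \<sigma> P (deg0 a) n p = (\<Sum>k\<le>n. if k = n then P n p * a ((inv \<sigma> ^^ n) p) else 0)"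
    unfolding skew_mult_def deg0_def by (intro sum.cong) (auto simp: st_pow)
  also have "\<dots> = P n p * a ((inv \<sigma> ^^ n) p)" by (simp add: sum.delta')
  finally show ?thesis .
qed

theorem theorem7:
  fixes \<sigma> :: "'j::countable \<Rightarrow> 'j"
  assumes "bij \<sigma>"
  shows "centralizer \<sigma> = {P \<in> SkewPoly. \<forall>k. \<forall>p \<in> Sep \<sigma> k. P k p = 0}"
proof (intro set_eqI iffI)
  fix P assume P: "P \<in> centralizer \<sigma>"
  have "P k p = 0" if "p \<in> Sep \<sigma> k" for k p
  proof (rule ccontr)
    assume nz: "P k p \<noteq> 0"
    define a :: "'j \<Rightarrow> real" where "a = (\<lambda>q. if q = p then 1 else 0)"
    have "a \<in> Alg" unfolding Alg_def a_def by simp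
    with P have "skew_mult \<sigma> (deg0 a) P k p = skew_mult \<sigma> P (deg0 a) k p"
      unfolding centralizer_def by auto
    hence "a p * P k p = P k p * a ((inv \<sigma> ^^ k) p)" by (simp add: left_mult right_mult)
    with nz have "(inv \<sigma> ^^ k) p = p" unfolding a_def by (auto split: if_splits)
    hence "(\<sigma> ^^ k) p = p" using pow_inv_cancel[OF assms, of k p] by simp
    with that show False unfolding Sep_def by simp
  qed
  with P show "P \<in> {P \<in> SkewPoly. \<forall>k. \<forall>p \<in> Sep \<sigma> k. P k p = 0}"
    unfolding centralizer_def by auto
next
  fix P assume P: "P \<in> {P \<in> SkewPoly. \<forall>k. \<forall>p \<in> Sep \<sigma> k. P k p = 0}"
  have "skew_mult \<sigma> (deg0 a) P = skew_mult \<sigma> P (deg0 a)" for a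
  proof (intro ext)
    fix n p
    show "skew_mult \<sigma> (deg0 a) P n p = skew_mult \<sigma> P (deg0 a) n p"
    proof (cases "(\<sigma> ^^ n) p = p")
      case True
      hence "(inv \<sigma> ^^ n) p = p" using inv_pow_cancel[OF assms, of n p] by simp
      then show ?thesis by (simp add: left_mult right_mult)
    next
      case False
      hence "P n p = 0" using P unfolding Sep_def by auto
      then show ?thesis by (simp add: left_mult right_mult)
    qed
  qed
  with P show "P \<in> centralizer \<sigma>" unfolding centralizer_def by auto
qed

end
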